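(* Fix integers $m\ge d\ge 1$ and put $\lambda=d/m$. Let $p$ and $q$ be monic polynomials of degree $d$ all of whose roots are real and nonnegative. Then \[ \mathcal{R}^{d,\lambda}_{\mathbb{S}[p \boxplus_{d,\lambda} q]}(s) = \mathcal{R}^{d,\lambda}_{\mathbb{S}p}(s) +\mathcal{R}^{d,\lambda}_{\mathbb{S}q}(s). \]
   Context: Rectangular finite convolution: for $p(x)=\sum_{i=0}^d(-1)^i a_i x^{d-i}$ and $q(x)=\sum_{i=0}^d(-1)^i b_i x^{d-i}$ define \[ (p\boxplus_{d,\lambda} q)(x)=\sum_{k=0}^d x^{d-k}(-1)^k\sum_{i+j=k}\frac{(d-i)!(d-j)!}{d!(d-k)!}\,\frac{(m-i)!(m-j)!}{m!(m-k)!}\,a_ib_j . \] (When $p=\det(xI_d-A^TA)$, $q=\det(xI_d-B^TB)$ for real $m\times d$ matrices $A,B$, this equals the average of $\det(xI_d-(A+QBR)^T(A+QBR))$ over Haar-distributed $Q\in\mathcal O_m$, $R\in\mathcal O_d$.) For a polynomial $p$ with nonnegative roots, $\mathbb{S}p(x):=p(x^2)$ is its symmetrization. Finite rectangular $R$-transform: for monic $p(x)=\sum_{i=0}^d(-1)^ip_ix^{d-i}$ with nonnegative roots, set \[ E_p(s):=\sum_{i=0}^d (-1)^i (md)^i\frac{(m-i)!(d-i)!}{m!\,d!}\,p_i\,s^i , \] and let $\mathcal{R}^{d,\lambda}_{\mathbb{S}p}(s)$ be the unique polynomial of degree at most $d$ such that $\mathcal{R}^{d,\lambda}_{\mathbb{S}p}(s)\equiv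 -\frac{s}{d}\frac{d}{ds}\log E_p(s)$ modulo $s^{d+1}$ (i.e. the coefficients of $s^0,\dots,s^d$ agree, as formal power series). *)

theory Defs
  imports "HOL-Computational_Algebra.Computational_Algebra"
begin

text \<open>Coefficient convention: p(x) = sum_{i=0}^d (-1)^i a_i x^(d-i), so
  a_i = (-1)^i * coeff p (d - i).\<close>

definition sgn_coeff :: "nat \<Rightarrow> real poly \<Rightarrow> nat \<Rightarrow> real" where
  "sgn_coeff d p i = (-1) ^ i * coeff p (d - i)"

definition rect_conv :: "nat \<Rightarrow> nat \<Rightarrow> real poly \<Rightarrow> real poly \<Rightarrow> real poly" where
  "rect_conv d m p q =
     (\<Sum>k\<le>d. monom ((-1) ^ k *
        (\<Sum>i\<le>k. (fact (d - i) * fact (d - (k - i))) / (fact d * fact (d - k))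
                 * ((fact (m - i) * fact (m - (k - i))) / (fact m * fact (m - k)))
                 * sgn_coeff d p i * sgn_coeff d q (k - i))) (d - k))"

definition symmetrize :: "real poly \<Rightarrow> real poly" where
  "symmetrize p = pcompose p [:0, 0, 1:]"

definition rect_E :: "nat \<Rightarrow> nat \<Rightarrow> real poly \<Rightarrow> real fps" where
  "rect_E d m p = Abs_fps (\<lambda>i. if i \<le> d then
       (-1) ^ i * (real m * real d) ^ i * (fact (m - i) * fact (d - i)) / (fact m * fact d)
       * sgn_coeff d p i else 0)"

text \<open>Finite rectangular R-transform of S p: the unique polynomial of degree at most d
  agreeing with -(s/d) (d/ds) log E_p(s) = -(s/d) E_p'(s)/E_p(s) in the coefficients of
  s^0, ..., s^d.\<close>

definition rect_R :: "nat \<Rightarrow> nat \<Rightarrow> real poly \<Rightarrow> real poly" where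
  "rect_R d m p =
     (let F = - fps_const (1 / real d) * fps_X * fps_deriv (rect_E d m p) * inverse (rect_E d m p)
      in (\<Sum>i\<le>d. monom (fps_nth F i) i))"

definition monic_nonneg_rooted :: "nat \<Rightarrow> real poly \<Rightarrow> bool" where
  "monic_nonneg_rooted d p \<longleftrightarrow> degree p = d \<and> lead_coeff p = 1 \<and>
     (\<forall>z. poly (map_poly complex_of_real p) z = 0 \<longrightarrow> Im z = 0 \<and> Re z \<ge> 0)"

end

theory Submission
  imports Defs
begin

lemma conv_sgn:
  assumes "k \<le> d"
  shows "sgn_coeff d (rect_conv d m p q) k =
     (\<Sum>i\<le>k. (fact (d - i) * fact (d - (k - i))) / (fact d * fact (d - k))
                 * ((fact (m - i) * fact (m - (k - i))) / (fact m * fact (m - k)))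
                 * sgn_coeff d p i * sgn_coeff d q (k - i))"
proof -
  have "coeff (rect_conv d m p q) (d - k) =
     (\<Sum>k'\<le>d. if k' = k then (-1) ^ k *
        (\<Sum>i\<le>k. (fact (d - i) * fact (d - (k - i))) / (fact d * fact (d - k))
                 * ((fact (m - i) * fact (m - (k - i))) / (fact m * fact (m - k)))
                 * sgn_coeff d p i * sgn_coeff d q (k - i)) else 0)"
    unfolding rect_conv_def coeff_sum coeff_monom
    apply (rule sum.cong, simp)
    using assms by auto
  also have "\<dots> = (-1) ^ k *
        (\<Sum>i\<le>k. (fact (d - i) * fact (d - (k - i))) / (fact d * fact (d - k))
                 * ((fact (m - i) * fact (m - (k - i))) / (fact m * fact (m - k)))
                 * sgn_coeff d p i * sgn_coeff d q (k - i))"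
    using assms by (simp add: sum.delta)
  finally show ?thesis unfolding sgn_coeff_def[of d "rect_conv d m p q"]
    by (simp add: power_mult_distrib[symmetric])
qed

lemma term_eq:
  fixes s1 s2 s M1 M2 M fmk fdk fm fd fdi fdki fmi fmki a b :: real
  assumes "s1 * s2 = s" "M1 * M2 = M" "fmk \<noteq> 0" "fdk \<noteq> 0" "fm \<noteq> 0" "fd \<noteq> 0"
  shows "s * M * (fmk * fdk) / (fm * fd) * ((fdi * fdki) / (fd * fdk) * ((fmi * fmki) / (fm * fmk)) * a * b)
    = (s1 * M1 * (fmi * fdi) / (fm * fd) * a) * (s2 * M2 * (fmki * fdki) / (fm * fd) * b)"
  unfolding assms(1,2)[symmetric] using assms(3-6) by (simp add: field_simps)

lemma E_conv_nth:
  assumes "k \<le> d" "d \<le> m"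
  shows "rect_E d m (rect_conv d m p q) $ k = (rect_E d m p * rect_E d m q) $ k"
proof -
  have L: "rect_E d m (rect_conv d m p q) $ k =
    (\<Sum>i\<le>k. (-1) ^ k * (real m * real d) ^ k * (fact (m - k) * fact (d - k)) / (fact m * fact d) *
     ((fact (d - i) * fact (d - (k - i))) / (fact d * fact (d - k))
                 * ((fact (m - i) * fact (m - (k - i))) / (fact m * fact (m - k)))
                 * sgn_coeff d p i * sgn_coeff d q (k - i)))"
    using assms by (simp add: rect_E_def conv_sgn sum_distrib_left)
  have R: "(rect_E d m p * rect_E d m q) $ k = (\<Sum>i\<le>k.
     ((-1) ^ i * (real m * real d) ^ i * (fact (m - i) * fact (d - i)) / (fact m * fact d)
       * sgn_coeff d p i) *
     ((-1) ^ (k - i) * (real m * real d) ^ (k - i) * (fact (m - (k - i)) * fact (d - (k - i))) / (fact m * fact d)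
       * sgn_coeff d q (k - i)))"
    unfolding fps_mult_nth atLeast0AtMost
    apply (rule sum.cong, simp)
    using assms by (simp add: rect_E_def)
  show ?thesis unfolding L R
  proof (rule sum.cong, simp)
    fix i assume "i \<in> {..k}"
    then have ik: "i \<le> k" by simp
    have e1: "((-1::real) ^ i) * (-1) ^ (k - i) = (-1) ^ k"
      using ik by (simp add: power_add[symmetric])
    have e2: "(real m * real d) ^ i * (real m * real d) ^ (k - i) = (real m * real d) ^ k"
      using ik by (simp add: power_add[symmetric])
    have nz: "(fact (m - k) :: real) \<noteq> 0" "(fact (d - k) :: real) \<noteq> 0"
      "(fact m :: real) \<noteq> 0" "(fact d :: real) \<noteq> 0" by auto
    show "(-1) ^ k * (real m * real d) ^ k * (fact (m - k) * fact (d - k)) / (fact m * fact d) *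
     ((fact (d - i) * fact (d - (k - i))) / (fact d * fact (d - k))
                 * ((fact (m - i) * fact (m - (k - i))) / (fact m * fact (m - k)))
                 * sgn_coeff d p i * sgn_coeff d q (k - i)) =
     ((-1) ^ i * (real m * real d) ^ i * (fact (m - i) * fact (d - i)) / (fact m * fact d)
       * sgn_coeff d p i) *
     ((-1) ^ (k - i) * (real m * real d) ^ (k - i) * (fact (m - (k - i)) * fact (d - (k - i))) / (fact m * fact d)
       * sgn_coeff d q (k - i))"
      by (rule term_eq[OF e1 e2 nz])
  qed
qed

definition lowzero :: "nat \<Rightarrow> real fps \<Rightarrow> bool" where
  "lowzero n D \<longleftrightarrow> (\<forall>i\<le>n. D $ i = 0)"

lemma lowzero_mult: "lowzero n D \<Longrightarrow> lowzero n (C * D)"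
  unfolding lowzero_def fps_mult_nth by auto

lemma lowzero_mult2: "lowzero n D \<Longrightarrow> lowzero n (D * C)"
  using lowzero_mult by (metis mult.commute)

lemma lowzero_Xderiv: "lowzero n D \<Longrightarrow> lowzero n (fps_X * fps_deriv D)"
  unfolding lowzero_def by (auto simp: fps_X_mult_nth)

lemma lowzero_add: "lowzero n A \<Longrightarrow> lowzero n B \<Longrightarrow> lowzero n (A + B)"
  unfolding lowzero_def by auto

lemma inv_diff:
  fixes A B :: "real fps"
  assumes "A $ 0 \<noteq> 0" "B $ 0 \<noteq> 0"
  shows "inverse A - inverse B = inverse A * inverse B * (B - A)"
proof -
  have "inverse A * inverse B * (B - A) = inverse A * (inverse B * B) - (inverse A * A) * inverse B"
    by (simp add: algebra_simps)
  also have "\<dots> = inverse A - inverse B"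
    using assms by (simp add: inverse_mult_eq_1)
  finally show ?thesis by simp
qed

lemma logderiv_close:
  fixes A B :: "real fps"
  assumes "A $ 0 \<noteq> 0" "B $ 0 \<noteq> 0" "lowzero n (A - B)"
  shows "lowzero n (fps_X * fps_deriv A * inverse A - fps_X * fps_deriv B * inverse B)"
proof -
  have eq: "fps_X * fps_deriv A * inverse A - fps_X * fps_deriv B * inverse B =
     (fps_X * fps_deriv (A - B)) * inverse A + (fps_X * fps_deriv B) * (inverse A * inverse B * (B - A))"
    unfolding inv_diff[OF assms(1,2), symmetric] by (simp add: algebra_simps)
  have "lowzero n (B - A)" using assms(3) unfolding lowzero_def by auto
  then show ?thesis unfolding eq
    by (intro lowzero_add lowzero_mult lowzero_mult2 lowzero_Xderiv assms(3))
qed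

lemma logderiv_mult:
  fixes A B :: "real fps"
  assumes "A $ 0 \<noteq> 0" "B $ 0 \<noteq> 0"
  shows "fps_deriv (A * B) * inverse (A * B) = fps_deriv A * inverse A + fps_deriv B * inverse B"
proof -
  have "fps_deriv (A * B) * inverse (A * B) =
     fps_deriv A * inverse A * (B * inverse B) + fps_deriv B * inverse B * (A * inverse A)"
    using assms by (simp add: fps_inverse_mult algebra_simps)
  also have "\<dots> = fps_deriv A * inverse A + fps_deriv B * inverse B"
    using assms by (simp add: inverse_mult_eq_1')
  finally show ?thesis .
qed

lemma E0:
  assumes "monic_nonneg_rooted d p"
  shows "rect_E d m p $ 0 = 1"
proof -
  have "coeff p d = 1" using assms unfolding monic_nonneg_rooted_def by auto
  then show ?thesis by (simp add: rect_E_def sgn_coeff_def)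
qed

theorem mainTheorem1:
  fixes d m :: nat and p q :: "real poly"
  assumes "1 \<le> d" and "d \<le> m"
    and "monic_nonneg_rooted d p" and "monic_nonneg_rooted d q"
  shows "rect_R d m (rect_conv d m p q) = rect_R d m p + rect_R d m q"
proof -
  define Er where "Er = rect_E d m (rect_conv d m p q)"
  define Ep where "Ep = rect_E d m p"
  define Eq where "Eq = rect_E d m q"
  define c where "c = - fps_const (1 / real d)"
  have p0: "Ep $ 0 = 1" unfolding Ep_def using E0 assms(3) .
  have q0: "Eq $ 0 = 1" unfolding Eq_def using E0 assms(4) .
  have low: "lowzero d (Er - Ep * Eq)"
    unfolding lowzero_def Er_def Ep_def Eq_def using E_conv_nth assms(2) by simp
  have r0: "Er $ 0 = 1"
    using low p0 q0 unfolding lowzero_def by (auto simp: fps_mult_nth)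
  have pq0: "(Ep * Eq) $ 0 \<noteq> 0" using p0 q0 by (simp add: fps_mult_nth)
  have cl: "lowzero d (fps_X * fps_deriv Er * inverse Er - fps_X * fps_deriv (Ep * Eq) * inverse (Ep * Eq))"
    using logderiv_close[OF _ pq0 low] r0 by simp
  have split: "fps_X * fps_deriv (Ep * Eq) * inverse (Ep * Eq) =
     fps_X * fps_deriv Ep * inverse Ep + fps_X * fps_deriv Eq * inverse Eq"
    using logderiv_mult[of Ep Eq] p0 q0 by (simp only: mult.assoc distrib_left[symmetric]) simp
  have key: "\<And>i. i \<le> d \<Longrightarrow> (c * fps_X * fps_deriv Er * inverse Er) $ i =
      (c * fps_X * fps_deriv Ep * inverse Ep) $ i + (c * fps_X * fps_deriv Eq * inverse Eq) $ i"
  proof -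
    fix i assume i: "i \<le> d"
    have "(fps_X * fps_deriv Er * inverse Er) $ i =
        (fps_X * fps_deriv Ep * inverse Ep + fps_X * fps_deriv Eq * inverse Eq) $ i"
      using cl i unfolding lowzero_def split by simp
    then show "(c * fps_X * fps_deriv Er * inverse Er) $ i =
      (c * fps_X * fps_deriv Ep * inverse Ep) $ i + (c * fps_X * fps_deriv Eq * inverse Eq) $ i"
      unfolding c_def by (simp add: mult.assoc add_divide_distrib)
  qed
  show ?thesis
    unfolding rect_R_def Let_def
    unfolding Er_def[symmetric] Ep_def[symmetric] Eq_def[symmetric] c_def[symmetric]
    by (simp add: key add_monom[symmetric] sum.distrib)
qed

end
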